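(* In the setting below, suppose the tight disturbance bound assumption and the persistent excitation assumption hold, and let $\Theta_t$ be the fixed-complexity parameter set with periodic update. Then for every $\epsilon>0$, every $\theta\in\Theta_0$ such that $[M_\Theta]_i(\theta-\theta^\ast)\ge\epsilon$ for some $i\in\{1,\dots,r\}$, and every $t\in\mathbb{N}_{\ge0}$, $$\Pr\{\theta\in\Theta_t\}\ \le\ \Bigl\{1-\Bigl[p_w\Bigl(\frac{\epsilon\beta}{N_u\tau}\Bigr)\Bigr]^{N_u}\Bigr\}^{\lfloor t/N_u\rfloor}.$$
   Context: Setting: $\theta^\ast\in\mathbb{R}^p$ is a fixed (unknown) parameter vector. $\mathcal{W}=\{w\in\mathbb{R}^{n_x}:\Pi_w w\le\pi_w\}$ is a compact convex polytope with $\pi_w>0$. The disturbances $w_0,w_1,\dots$ are independent random vectors with $w_t\in\mathcal{W}$ for all $t$. $D_0,D_1,\dots\in\mathbb{R}^{n_x\times p}$ is a given (non-random) sequence of regressor matrices. For $t\ge1$ the (random) unfalsified parameter set is $\Delta_t=\{\theta\in\mathbb{R}^p: D_{t-1}(\theta^\ast-\theta)+w_{t-1}\in\mathcal{W}\}$. $\|\cdot\|$ is the Euclidean norm (induced 2-norm for matrices); $\partial\mathcal{W}$ is the boundary of $\mathcal{W}$; $[M]_i$ is the $i$th row of $M$. Tight disturbance bound assumption: there is a function $p_w:(0,\infty)\to(0,1]$ such that for all $w^0\in\partial\mathcal{W}$, all $\epsilon>0$ and all $t\ge0$, $\Pr\{\|w_t-w^0\|<\epsilon\}\ge p_w(\epsilon)$.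 Persistent excitation assumption: there exist $\tau>0$, $\beta>0$ and an integer $N_u\ge\lceil p/n_x\rceil$ such that for every $t\ge0$, $\|D_t\|\le\tau$ and $\sum_{j=t}^{t+N_u-1}D_j^\top D_j\succeq\beta I$. Fixed-complexity parameter set with periodic update: $M_\Theta\in\mathbb{R}^{r\times p}$ has rows of unit Euclidean norm and is such that $\Theta(\mu):=\{\theta:M_\Theta\theta\le\mu\}$ is bounded for every $\mu\in\mathbb{R}^r$; $\Theta_0=\Theta(\mu_0)$ contains $\theta^\ast$. For $t\ge1$: if $t=kN_u$ for some integer $k\ge1$, then $\Theta_t=\Theta(\mu_t)$ with $[\mu_t]_i=\max\{[M_\Theta]_i\theta:\theta\in\Theta_{t-N_u}\cap\bigcap_{j=t-N_u+1}^t\Delta_j\}$ for $i=1,\dots,r$ (the smallest set of the form $\Theta(\mu)$ containing that intersection); otherwise $\Theta_t=\Theta_{t-1}$. *)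

theory Defs
  imports "HOL-Probability.Probability"
begin

definition polyset :: "real^'n^'m \<Rightarrow> real^'m \<Rightarrow> (real^'n) set" where
  "polyset A b = {x. \<forall>i. A $ i \<bullet> x \<le> b $ i}"

definition unfalsified ::
  "(nat \<Rightarrow> real^'p^'nx) \<Rightarrow> (nat \<Rightarrow> 'a \<Rightarrow> real^'nx) \<Rightarrow> real^'p \<Rightarrow>
   real^'nx^'m \<Rightarrow> real^'m \<Rightarrow> nat \<Rightarrow> 'a \<Rightarrow> (real^'p) set" where
  "unfalsified D w thstar Piw piw t om =
     {th. D (t - 1) *v (thstar - th) + w (t - 1) om \<in> polyset Piw piw}"

text \<open>mu at the k-th update time k*Nu (periodic update); mu_0 given.\<close>
primrec mu_seq ::
  "real^'p^'r \<Rightarrow> real^'r \<Rightarrow> nat \<Rightarrow> (nat \<Rightarrow> real^'p^'nx) \<Rightarrow> (nat \<Rightarrow> 'a \<Rightarrow> real^'nx) \<Rightarrow>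
   real^'p \<Rightarrow> real^'nx^'m \<Rightarrow> real^'m \<Rightarrow> nat \<Rightarrow> 'a \<Rightarrow> real^'r" where
  "mu_seq MT mu0 Nu D w thstar Piw piw 0 om = mu0"
| "mu_seq MT mu0 Nu D w thstar Piw piw (Suc k) om =
     (\<chi> i. Sup ((\<lambda>th. MT $ i \<bullet> th) `
        (polyset MT (mu_seq MT mu0 Nu D w thstar Piw piw k om) \<inter>
         (\<Inter>j\<in>{k * Nu + 1 .. Suc k * Nu}. unfalsified D w thstar Piw piw j om))))"

text \<open>Theta_t: updated at t = k*Nu (k >= 1), otherwise Theta_t = Theta_(t-1);
  hence Theta_t = Theta(mu at time (t div Nu)*Nu).\<close>
definition Theta_set ::
  "real^'p^'r \<Rightarrow> real^'r \<Rightarrow> nat \<Rightarrow> (nat \<Rightarrow> real^'p^'nx) \<Rightarrow> (nat \<Rightarrow> 'a \<Rightarrow> real^'nx) \<Rightarrow>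
   real^'p \<Rightarrow> real^'nx^'m \<Rightarrow> real^'m \<Rightarrow> nat \<Rightarrow> 'a \<Rightarrow> (real^'p) set" where
  "Theta_set MT mu0 Nu D w thstar Piw piw t om =
     polyset MT (mu_seq MT mu0 Nu D w thstar Piw piw (t div Nu) om)"

end

theory Submission imports Defs begin

lemma closed_polyset: "closed (polyset A b)"
proof -
  have "polyset A b = (\<Inter>i. {x. A $ i \<bullet> x \<le> b $ i})" unfolding polyset_def by auto
  then show ?thesis by (auto intro!: closed_INT closed_halfspace_le)
qed

lemma closed_unfalsified: "closed (unfalsified D w thstar Piw piw t om)"
proof -
  have c: "\<And>A x. isCont (\<lambda>x. (A::real^'p^'nx) *v x) x"
    by (rule linear_continuous_at) simp
  show ?thesis
  unfolding unfalsified_def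
  by (rule continuous_closed_vimage[OF closed_polyset, unfolded vimage_def])
     (simp add: matrix_vector_mult_diff_distrib, intro continuous_intros c)
qed

lemma matvec_sum: "finite J \<Longrightarrow> (\<Sum>j\<in>J. A j) *v x = (\<Sum>j\<in>J. A j *v x)"
  by (induction J rule: finite_induct) (auto simp: matrix_vector_mult_add_rdistrib)

lemma gram_inner: "((transpose A ** A) *v y) \<bullet> d = (A *v y) \<bullet> (A *v (d::real^'n))"
  by (simp add: matrix_vector_mul_assoc[symmetric] dot_lmul_matrix)

lemma solve_pe:
  fixes G :: "real^'n^'n"
  assumes pe: "\<forall>x. x \<bullet> (G *v x) \<ge> beta*(x\<bullet>x)" and b: "beta > 0"
  shows "\<exists>y. G *v y = z \<and> norm y \<le> norm z / beta"
proof -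
  have "\<forall>x. G *v x = 0 \<longrightarrow> x = 0"
  proof (intro allI impI)
    fix x assume "G *v x = 0"
    with pe have "beta * (x \<bullet> x) \<le> 0" by (metis inner_zero_right)
    with b have "x \<bullet> x \<le> 0" by (simp add: mult_le_0_iff)
    then show "x = 0" by (metis inner_ge_zero inner_eq_zero_iff order_antisym)
  qed
  then obtain B where "B ** G = mat 1" using matrix_left_invertible_ker by blast
  then have GB: "G ** B = mat 1" using matrix_left_right_inverse by blast
  define y where "y = B *v z"
  have Gy: "G *v y = z" unfolding y_def by (simp add: matrix_vector_mul_assoc GB)
  have "beta * (norm y)^2 \<le> y \<bullet> z" using pe Gy by (metis power2_norm_eq_inner)
  also have "\<dots> \<le> norm y * norm z" by (rule norm_cauchy_schwarz)
  finally have h: "beta * (norm y)^2 \<le> norm y * norm z" .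
  have "norm y \<le> norm z / beta"
  proof (cases "norm y = 0")
    case True then show ?thesis using b by simp
  next
    case False
    then have "norm y > 0" by simp
    with h have "beta * norm y \<le> norm z" by (simp add: power2_eq_square)
    then show ?thesis using b by (simp add: field_simps)
  qed
  with Gy show ?thesis by blast
qed

lemma maximizer_frontier:
  fixes W :: "(real^'n) set"
  assumes "w0 \<in> W" "v \<noteq> 0" "\<forall>u\<in>W. v \<bullet> u \<le> v \<bullet> w0" "closed W"
  shows "w0 \<in> frontier W"
proof -
  have "w0 \<notin> interior W"
  proof
    assume "w0 \<in> interior W"
    then obtain r where r: "r > 0" "ball w0 r \<subseteq> W" using mem_interior by blast
    define u where "u = w0 + (r / 2 / norm v) *\<^sub>R v"
    have "dist w0 u = r/2" using assms(2) r unfolding u_def by (simp add: dist_norm)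
    then have "u \<in> W" using r by auto
    moreover have "v \<bullet> u = v \<bullet> w0 + r/2 * norm v"
      using assms(2) unfolding u_def by (simp add: inner_add_right power2_norm_eq_inner[symmetric] power2_eq_square)
    moreover have "r/2 * norm v > 0" using r assms(2) by simp
    ultimately show False using assms(3) by fastforce
  qed
  then show ?thesis using assms by (simp add: frontier_def closure_closed)
qed

lemma key_bound:
  fixes D :: "nat \<Rightarrow> real^'p^'nx" and m y x thstar :: "real^'p"
    and W :: "(real^'nx) set" and wj wz :: "nat \<Rightarrow> real^'nx"
  assumes J: "finite J" "card J = Nu" and Nu0: "Nu > 0"
    and G: "(\<Sum>j\<in>J. transpose (D j) ** D j) *v y = - m" and m0: "m \<noteq> 0"
    and ny: "norm y \<le> 1/beta" and b: "beta > 0" and tau: "tau > 0"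
    and Dn: "\<forall>j. onorm (\<lambda>x. D j *v x) \<le> tau"
    and wz: "\<forall>j\<in>J. D j *v y \<noteq> 0 \<longrightarrow> (\<forall>u\<in>W. (D j *v y) \<bullet> u \<le> (D j *v y) \<bullet> wz j)"
    and wc: "\<forall>j\<in>J. D j *v y \<noteq> 0 \<longrightarrow> norm (wj j - wz j) < e"
    and e: "e = eps*beta/(real Nu * tau)" and eps: "eps > 0"
    and mem: "\<forall>j\<in>J. D j *v (thstar - x) + wj j \<in> W"
  shows "m \<bullet> (x - thstar) < eps"
proof -
  define v where "v j = D j *v y" for j
  define d where "d = x - thstar"
  have sumeq: "(\<Sum>j\<in>J. transpose (D j) ** D j) *v y = (\<Sum>j\<in>J. transpose (D j) *v v j)"
    using J(1) by (simp add: matvec_sum v_def matrix_vector_mul_assoc[symmetric])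
  have "m \<bullet> d = - (((\<Sum>j\<in>J. transpose (D j) ** D j) *v y) \<bullet> d)"
    using G by simp
  also have "\<dots> = - (\<Sum>j\<in>J. v j \<bullet> (D j *v d))"
    using J(1) by (simp add: matvec_sum inner_sum_left gram_inner v_def)
  also have "\<dots> = (\<Sum>j\<in>J. - (v j \<bullet> (D j *v d)))" by (simp add: sum_negf)
  finally have md: "m \<bullet> d = (\<Sum>j\<in>J. - (v j \<bullet> (D j *v d)))" .
  have e0: "e \<ge> 0" using e eps b tau by simp
  have tm: "- (v j \<bullet> (D j *v d)) \<le> norm (v j) * e"
    and sterm: "v j \<noteq> 0 \<Longrightarrow> - (v j \<bullet> (D j *v d)) < norm (v j) * e" if j: "j \<in> J" for j
  proof -
    have u: "wj j - D j *v d \<in> W" using mem j unfolding d_def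
      by (metis (no_types, lifting) add.commute diff_conv_add_uminus matrix_vector_mult_diff_distrib minus_diff_eq)
    have s: "- (v j \<bullet> (D j *v d)) < norm (v j) * e" if nz: "v j \<noteq> 0"
    proof -
      have "v j \<bullet> (wj j - D j *v d) \<le> v j \<bullet> wz j" using wz j u nz unfolding v_def by blast
      then have "- (v j \<bullet> (D j *v d)) \<le> v j \<bullet> (wz j - wj j)" by (simp add: inner_diff_right)
      also have "\<dots> \<le> norm (v j) * norm (wz j - wj j)" by (rule norm_cauchy_schwarz)
      also have "\<dots> < norm (v j) * e" using wc j nz unfolding v_def
        by (simp add: norm_minus_commute)
      finally show ?thesis .
    qed
    show "- (v j \<bullet> (D j *v d)) \<le> norm (v j) * e"
      using s e0 by (cases "v j = 0") auto
    show "v j \<noteq> 0 \<Longrightarrow> - (v j \<bullet> (D j *v d)) < norm (v j) * e" by (rule s)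
  qed
  have ex: "\<exists>j\<in>J. v j \<noteq> 0"
  proof (rule ccontr)
    assume "\<not> ?thesis"
    then have "(\<Sum>j\<in>J. transpose (D j) *v v j) = 0" by simp
    with sumeq G m0 show False by simp
  qed
  have "m \<bullet> d < (\<Sum>j\<in>J. norm (v j) * e)"
    unfolding md using ex tm sterm J(1) by (intro sum_strict_mono_ex1) auto
  also have "\<dots> \<le> (\<Sum>j\<in>J. (tau / beta) * e)"
  proof (intro sum_mono mult_right_mono e0)
    fix j assume "j \<in> J"
    have "norm (v j) \<le> onorm (\<lambda>x. D j *v x) * norm y" unfolding v_def
      by (rule onorm) simp
    also have "\<dots> \<le> tau * (1/beta)"
      using Dn ny tau by (intro mult_mono) (auto intro: onorm_pos_le)
    finally show "norm (v j) \<le> tau / beta" by simp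
  qed
  also have "\<dots> = eps" using J e b tau eps Nu0
    by (auto simp: field_simps)
  finally show ?thesis unfolding d_def .
qed

definition Sblk where
  "Sblk MT mu0 Nu D w thstar Piw piw k om =
     polyset MT (mu_seq MT mu0 Nu D w thstar Piw piw k om) \<inter>
     (\<Inter>j\<in>{k * Nu + 1 .. Suc k * Nu}. unfalsified D w thstar Piw piw j om)"

lemma S_max:
  assumes bdd: "\<forall>mu. bounded (polyset MT mu)"
    and thk: "thstar \<in> polyset MT (mu_seq MT mu0 Nu D w thstar Piw piw k om)"
    and wW: "\<forall>j. w j om \<in> polyset Piw piw"
  shows "thstar \<in> Sblk MT mu0 Nu D w thstar Piw piw k om"
    and "\<exists>x\<in>Sblk MT mu0 Nu D w thstar Piw piw k om.
           mu_seq MT mu0 Nu D w thstar Piw piw (Suc k) om $ i = MT $ i \<bullet> x \<and>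
           (\<forall>x'\<in>Sblk MT mu0 Nu D w thstar Piw piw k om. MT $ i \<bullet> x' \<le> MT $ i \<bullet> x)"
proof -
  let ?S = "Sblk MT mu0 Nu D w thstar Piw piw k om"
  show th: "thstar \<in> ?S" using thk wW unfolding Sblk_def unfalsified_def by auto
  have "closed ?S" unfolding Sblk_def
    by (intro closed_Int closed_INT ballI closed_polyset closed_unfalsified)
  moreover have "bounded ?S" unfolding Sblk_def
    by (rule bounded_subset[OF bdd[rule_format]]) auto
  ultimately have "compact ?S" by (simp add: compact_eq_bounded_closed)
  moreover have "continuous_on ?S (\<lambda>x. MT $ i \<bullet> x)" by (intro continuous_intros)
  ultimately obtain x where x: "x \<in> ?S" "\<forall>x'\<in>?S. MT $ i \<bullet> x' \<le> MT $ i \<bullet> x"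
    using continuous_attains_sup[of ?S "\<lambda>x. MT $ i \<bullet> x"] th by blast
  have "Sup ((\<lambda>th. MT $ i \<bullet> th) ` ?S) = MT $ i \<bullet> x"
    using x by (intro cSup_eq_maximum) auto
  then have "mu_seq MT mu0 Nu D w thstar Piw piw (Suc k) om $ i = MT $ i \<bullet> x"
    by (simp add: Sblk_def)
  with x show "\<exists>x\<in>?S. mu_seq MT mu0 Nu D w thstar Piw piw (Suc k) om $ i = MT $ i \<bullet> x \<and>
           (\<forall>x'\<in>?S. MT $ i \<bullet> x' \<le> MT $ i \<bullet> x)" by blast
qed

lemma mu_props:
  assumes bdd: "\<forall>mu. bounded (polyset MT mu)"
    and th0: "thstar \<in> polyset MT mu0"
    and wW: "\<forall>j. w j om \<in> polyset Piw piw"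
  shows "thstar \<in> polyset MT (mu_seq MT mu0 Nu D w thstar Piw piw k om)"
proof (induction k)
  case 0 then show ?case using th0 by simp
next
  case (Suc k)
  show ?case unfolding polyset_def
  proof (intro CollectI allI)
    fix i
    from S_max[OF bdd Suc wW] obtain x where
      "mu_seq MT mu0 Nu D w thstar Piw piw (Suc k) om $ i = MT $ i \<bullet> x"
      "\<forall>x'\<in>Sblk MT mu0 Nu D w thstar Piw piw k om. MT $ i \<bullet> x' \<le> MT $ i \<bullet> x"
      by blast
    with S_max(1)[OF bdd Suc wW] show "MT $ i \<bullet> thstar \<le> mu_seq MT mu0 Nu D w thstar Piw piw (Suc k) om $ i"
      by auto
  qed
qed

lemma mu_mono:
  assumes bdd: "\<forall>mu. bounded (polyset MT mu)"
    and th0: "thstar \<in> polyset MT mu0"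
    and wW: "\<forall>j. w j om \<in> polyset Piw piw"
  shows "polyset MT (mu_seq MT mu0 Nu D w thstar Piw piw (Suc k) om)
         \<subseteq> polyset MT (mu_seq MT mu0 Nu D w thstar Piw piw k om)"
proof
  fix z assume z: "z \<in> polyset MT (mu_seq MT mu0 Nu D w thstar Piw piw (Suc k) om)"
  show "z \<in> polyset MT (mu_seq MT mu0 Nu D w thstar Piw piw k om)" unfolding polyset_def
  proof (intro CollectI allI)
    fix i
    from S_max(2)[OF bdd mu_props[where w=w and om=om and k=k and Nu=Nu and D=D, OF bdd th0 wW] wW, of i] obtain x where
      x: "x \<in> Sblk MT mu0 Nu D w thstar Piw piw k om"
      "mu_seq MT mu0 Nu D w thstar Piw piw (Suc k) om $ i = MT $ i \<bullet> x"
      by blast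
    then have "MT $ i \<bullet> x \<le> mu_seq MT mu0 Nu D w thstar Piw piw k om $ i"
      unfolding Sblk_def polyset_def by auto
    moreover have "MT $ i \<bullet> z \<le> mu_seq MT mu0 Nu D w thstar Piw piw (Suc k) om $ i"
      using z unfolding polyset_def by blast
    ultimately show "MT $ i \<bullet> z \<le> mu_seq MT mu0 Nu D w thstar Piw piw k om $ i"
      using x(2) by linarith
  qed
qed

theorem theorem3:
  fixes M :: "'a measure"
    and thstar :: "real^'p"
    and Piw :: "real^'nx^'m" and piw :: "real^'m"
    and w :: "nat \<Rightarrow> 'a \<Rightarrow> real^'nx"
    and D :: "nat \<Rightarrow> real^'p^'nx"
    and pw :: "real \<Rightarrow> real"
    and tau beta :: real and Nu :: nat
    and MT :: "real^'p^'r" and mu0 :: "real^'r"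
    and eps :: real and th :: "real^'p" and t :: nat
  assumes "prob_space M"
    and W_compact: "compact (polyset Piw piw)"
    and piw_pos: "\<forall>i. piw $ i > 0"
    and w_rv: "\<forall>t. w t \<in> borel_measurable M"
    and w_indep: "prob_space.indep_vars M (\<lambda>_. borel) w UNIV"
    and w_in_W: "\<forall>t. \<forall>om\<in>space M. w t om \<in> polyset Piw piw"
    and pw_range: "\<forall>e>0. 0 < pw e \<and> pw e \<le> 1"
    and tight: "\<forall>w0\<in>frontier (polyset Piw piw). \<forall>e>0. \<forall>t.
                  measure M {om \<in> space M. norm (w t om - w0) < e} \<ge> pw e"
    and tau_pos: "tau > 0" and beta_pos: "beta > 0"
    and Nu_ge: "real Nu \<ge> real_of_int \<lceil>real CARD('p) / real CARD('nx)\<rceil>"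
    and D_bound: "\<forall>t. onorm (\<lambda>x. D t *v x) \<le> tau"
    and PE: "\<forall>t. \<forall>x. x \<bullet> ((\<Sum>j\<in>{t..t + Nu - 1}. transpose (D j) ** D j) *v x)
                      \<ge> beta * (x \<bullet> x)"
    and MT_rows: "\<forall>i. norm (MT $ i) = 1"
    and MT_bdd: "\<forall>mu. bounded (polyset MT mu)"
    and thstar_in: "thstar \<in> polyset MT mu0"
    and eps_pos: "eps > 0"
    and th_in: "th \<in> polyset MT mu0"
    and th_far: "\<exists>i. MT $ i \<bullet> (th - thstar) \<ge> eps"
  shows "measure M {om \<in> space M. th \<in> Theta_set MT mu0 Nu D w thstar Piw piw t om}
           \<le> (1 - (pw (eps * beta / (real Nu * tau))) ^ Nu) ^ (t div Nu)"
proof -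
  interpret P: prob_space M by fact
  define W where "W = polyset Piw piw"
  have Wc: "compact W" "closed W" using W_compact unfolding W_def
    by (auto simp: compact_imp_closed)
  have W0: "0 \<in> W" using piw_pos unfolding W_def polyset_def by (simp add: less_imp_le)
  have Nu0: "Nu > 0"
  proof -
    have "real CARD('p) / real CARD('nx) > 0" by simp
    then have "\<lceil>real CARD('p) / real CARD('nx)\<rceil> \<ge> 1" by simp
    then have "real_of_int \<lceil>real CARD('p) / real CARD('nx)\<rceil> \<ge> 1" by linarith
    with Nu_ge have "real Nu \<ge> 1" by linarith
    then show ?thesis by simp
  qed
  obtain i0 where i0: "MT $ i0 \<bullet> (th - thstar) \<ge> eps" using th_far by blast
  define m where "m = MT $ i0"
  have nm: "norm m = 1" using MT_rows unfolding m_def by simp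
  then have m0: "m \<noteq> 0" by auto
  define e where "e = eps*beta/(real Nu*tau)"
  have e0: "e > 0" unfolding e_def using eps_pos beta_pos tau_pos Nu0 by simp
  have pwe: "0 < pw e" "pw e \<le> 1" using pw_range e0 by auto
  define blk where "blk k = {k*Nu ..< k*Nu+Nu}" for k
  have blk_fin: "finite (blk k)" "card (blk k) = Nu" "blk k \<noteq> {}" for k
    unfolding blk_def using Nu0 by auto
  have blk_div: "j div Nu = k" if "j \<in> blk k" for j k
    using that unfolding blk_def by (intro div_nat_eqI) (auto simp: algebra_simps)
  define G where "G k = (\<Sum>j\<in>blk k. transpose (D j) ** D j)" for k
  have Gpe: "\<forall>x. x \<bullet> (G k *v x) \<ge> beta * (x\<bullet>x)" for k
  proof -
    have "{k*Nu..k*Nu + Nu - 1} = blk k" unfolding blk_def using Nu0 by auto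
    then show ?thesis using PE[rule_format, where t="k*Nu"] unfolding G_def by simp
  qed
  define y where "y k = (SOME y. G k *v y = -m \<and> norm y \<le> norm (-m)/beta)" for k
  have y: "G k *v y k = -m" "norm (y k) \<le> 1/beta" for k
  proof -
    have "G k *v y k = -m \<and> norm (y k) \<le> norm (-m)/beta"
      unfolding y_def by (rule someI_ex, rule solve_pe[OF Gpe beta_pos])
    then show "G k *v y k = -m" "norm (y k) \<le> 1/beta" using nm by auto
  qed
  define v where "v j = D j *v y (j div Nu)" for j
  define w0 where "w0 j = (SOME x. x \<in> W \<and> (\<forall>u\<in>W. v j \<bullet> u \<le> v j \<bullet> x))" for j
  have w0: "w0 j \<in> W \<and> (\<forall>u\<in>W. v j \<bullet> u \<le> v j \<bullet> w0 j)" for j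
  proof -
    have "\<exists>x\<in>W. \<forall>u\<in>W. v j \<bullet> u \<le> v j \<bullet> x"
      using W0 Wc by (intro continuous_attains_sup) (auto intro: continuous_intros)
    then have "\<exists>x. x \<in> W \<and> (\<forall>u\<in>W. v j \<bullet> u \<le> v j \<bullet> x)" by blast
    then show ?thesis unfolding w0_def by (rule someI_ex)
  qed
  define A where "A j = (if v j = 0 then UNIV else ball (w0 j) e)" for j
  define E where "E k = {om \<in> space M. \<forall>j\<in>blk k. w j om \<in> A j}" for k
  define K where "K = t div Nu"
  let ?mu = "\<lambda>k om. mu_seq MT mu0 Nu D w thstar Piw piw k om"
  have wW: "\<forall>j. w j om \<in> polyset Piw piw" if "om \<in> space M" for om
    using w_in_W that by blast
  have excl: "th \<notin> polyset MT (?mu (Suc k) om)" if om: "om \<in> E k" for om k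
  proof
    assume thin: "th \<in> polyset MT (?mu (Suc k) om)"
    have oms: "om \<in> space M" using om unfolding E_def by auto
    obtain x where x: "x \<in> Sblk MT mu0 Nu D w thstar Piw piw k om"
      "?mu (Suc k) om $ i0 = MT $ i0 \<bullet> x"
      using S_max(2)[OF MT_bdd mu_props[where w=w and om=om and k=k and Nu=Nu and D=D, OF MT_bdd thstar_in wW[OF oms]] wW[OF oms], of i0]
      by blast
    have "m \<bullet> (x - thstar) < eps"
    proof (rule key_bound[where J="blk k" and Nu=Nu and D=D and y="y k" and W=W and wz=w0
          and wj="\<lambda>j. w j om" and e=e and beta=beta and tau=tau])
      show "finite (blk k)" "card (blk k) = Nu" "Nu > 0" by (fact blk_fin Nu0)+
      show "(\<Sum>j\<in>blk k. transpose (D j) ** D j) *v y k = - m" using y(1) unfolding G_def .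
      show "m \<noteq> 0" "norm (y k) \<le> 1/beta" "beta > 0" "tau > 0" "eps > 0" 
        by (fact m0 y(2) beta_pos tau_pos eps_pos)+
      show "\<forall>j. onorm (\<lambda>x. D j *v x) \<le> tau" by (fact D_bound)
      show "e = eps*beta/(real Nu * tau)" by (fact e_def)
      show "\<forall>j\<in>blk k. D j *v y k \<noteq> 0 \<longrightarrow> (\<forall>u\<in>W. (D j *v y k) \<bullet> u \<le> (D j *v y k) \<bullet> w0 j)"
      proof (rule ballI, rule impI)
        fix j assume j: "j \<in> blk k"
        then have "v j = D j *v y k" using blk_div unfolding v_def by simp
        then show "\<forall>u\<in>W. (D j *v y k) \<bullet> u \<le> (D j *v y k) \<bullet> w0 j" using w0[of j] by simp
      qed
      show "\<forall>j\<in>blk k. D j *v y k \<noteq> 0 \<longrightarrow> norm (w j om - w0 j) < e"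
      proof (intro ballI impI)
        fix j assume j: "j \<in> blk k" and nz: "D j *v y k \<noteq> 0"
        then have "v j \<noteq> 0" using blk_div unfolding v_def by simp
        then have "w j om \<in> ball (w0 j) e" using om j unfolding E_def A_def by auto
        then show "norm (w j om - w0 j) < e" by (simp add: dist_norm norm_minus_commute)
      qed
      show "\<forall>j\<in>blk k. D j *v (thstar - x) + w j om \<in> W"
      proof
        fix j assume j: "j \<in> blk k"
        then have "Suc j \<in> {k * Nu + 1 .. Suc k * Nu}" unfolding blk_def by auto
        then have "x \<in> unfalsified D w thstar Piw piw (Suc j) om" using x(1) unfolding Sblk_def by blast
        then show "D j *v (thstar - x) + w j om \<in> W" unfolding unfalsified_def W_def by simp
      qed
    qed
    then have "m \<bullet> x < m \<bullet> th" using i0 unfolding m_def by (simp add: inner_diff_right)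
    moreover have "MT $ i0 \<bullet> th \<le> ?mu (Suc k) om $ i0" using thin unfolding polyset_def by blast
    ultimately show False using x(2) unfolding m_def by linarith
  qed
  have sub: "{om \<in> space M. th \<in> Theta_set MT mu0 Nu D w thstar Piw piw t om}
      \<subseteq> {om \<in> space M. \<forall>k<K. om \<notin> E k}"
  proof
    fix om assume "om \<in> {om \<in> space M. th \<in> Theta_set MT mu0 Nu D w thstar Piw piw t om}"
    then have oms: "om \<in> space M" and thT: "th \<in> polyset MT (?mu K om)"
      unfolding Theta_set_def K_def by auto
    have "om \<notin> E k" if k: "k < K" for k
    proof
      assume omE: "om \<in> E k"
      have mono: "\<And>n. polyset MT (?mu (Suc n) om) \<subseteq> polyset MT (?mu n om)"
        by (rule mu_mono[where w=w and om=om and Nu=Nu and D=D, OF MT_bdd thstar_in wW[OF oms]])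
      have "polyset MT (?mu K om) \<subseteq> polyset MT (?mu (Suc k) om)"
        using lift_Suc_antimono_le[of "\<lambda>n. polyset MT (?mu n om)", OF mono, of "Suc k" K] k by simp
      then show False using thT excl[OF omE] by blast
    qed
    with oms show "om \<in> {om \<in> space M. \<forall>k<K. om \<notin> E k}" by blast
  qed
  have Ameas: "A j \<in> sets borel" for j unfolding A_def by auto
  have Eeq: "E k = (\<Inter>j\<in>blk k. w j -` A j \<inter> space M)" for k
    using blk_fin(3)[of k] unfolding E_def by auto
  have Eev: "E k \<in> P.events" for k
    unfolding Eeq using blk_fin[of k] w_rv Ameas
    by (intro sets.finite_INT measurable_sets) auto
  have indw: "P.indep_sets (\<lambda>i. {w i -` B \<inter> space M | B. B \<in> sets borel}) UNIV"
    using w_indep unfolding P.indep_vars_def2 by blast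
  have PEk: "P.prob (E k) \<ge> pw e ^ Nu" for k
  proof -
    have "P.prob (E k) = (\<Prod>j\<in>blk k. P.prob (w j -` A j \<inter> space M))"
      unfolding Eeq using blk_fin[of k] Ameas by (intro P.indep_setsD[OF indw]) auto
    also have "\<dots> \<ge> (\<Prod>j\<in>blk k. pw e)"
    proof (intro prod_mono conjI)
      fix j assume j: "j \<in> blk k"
      show "0 \<le> pw e" using pwe by simp
      show "pw e \<le> P.prob (w j -` A j \<inter> space M)"
      proof (cases "v j = 0")
        case True
        then have "w j -` A j \<inter> space M = space M" unfolding A_def by auto
        then show ?thesis using pwe by (simp add: P.prob_space)
      next
        case False
        then have "w j -` A j \<inter> space M = {om \<in> space M. norm (w j om - w0 j) < e}"
          unfolding A_def by (auto simp: dist_norm norm_minus_commute)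
        moreover have "w0 j \<in> frontier (polyset Piw piw)"
          using maximizer_frontier[of "w0 j" W "v j"] w0[of j] False Wc unfolding W_def by blast
        ultimately show ?thesis using tight e0 by simp
      qed
    qed
    also have "(\<Prod>j\<in>blk k. pw e) = pw e ^ Nu" using blk_fin[of k] by simp
    finally show ?thesis .
  qed
  show ?thesis
  proof (cases "K = 0")
    case True
    then show ?thesis unfolding K_def by simp
  next
    case False
    define Y where "Y k om = restrict (\<lambda>i. w i om) (blk k)" for k om
    have disj: "disjoint_family_on blk {..<K}"
      unfolding disjoint_family_on_def blk_def
    proof (intro ballI impI)
      fix a b assume "a \<in> {..<K}" "b \<in> {..<K}" "a \<noteq> b"
      show "{a * Nu..<a * Nu + Nu} \<inter> {b * Nu..<b * Nu + Nu} = {}"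
      proof (rule ccontr)
        assume "\<not> ?thesis"
        then obtain j where "j \<in> {a * Nu..<a * Nu + Nu}" "j \<in> {b * Nu..<b * Nu + Nu}" by blast
        then have "j div Nu = a" "j div Nu = b" using blk_div unfolding blk_def by blast+
        with \<open>a \<noteq> b\<close> show False by simp
      qed
    qed
    have indY: "P.indep_vars (\<lambda>k. PiM (blk k) (\<lambda>_. borel)) Y {..<K}"
      unfolding Y_def by (rule P.indep_vars_restrict[OF w_indep _ disj]) auto
    then have indY2: "P.indep_sets (\<lambda>k. {Y k -` B \<inter> space M | B. B \<in> sets (PiM (blk k) (\<lambda>_. borel))}) {..<K}"
      unfolding P.indep_vars_def2 by blast
    define C where "C k = space (PiM (blk k) (\<lambda>_. borel)) - PiE (blk k) A" for k
    have Cs: "C k \<in> sets (PiM (blk k) (\<lambda>_. borel))" for k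
      unfolding C_def using blk_fin[of k] Ameas by (intro sets.Diff sets.top sets_PiM_I_finite) auto
    have CE: "Y k -` C k \<inter> space M = space M - E k" for k
      unfolding C_def Y_def E_def space_PiM by (auto simp: restrict_PiE_iff)
    have "measure M {om \<in> space M. th \<in> Theta_set MT mu0 Nu D w thstar Piw piw t om}
        \<le> P.prob (\<Inter>k\<in>{..<K}. space M - E k)"
    proof (rule P.finite_measure_mono)
      show "{om \<in> space M. th \<in> Theta_set MT mu0 Nu D w thstar Piw piw t om} \<subseteq> (\<Inter>k\<in>{..<K}. space M - E k)"
        using sub False by auto
      show "(\<Inter>k\<in>{..<K}. space M - E k) \<in> sets M"
        using False Eev by (intro sets.finite_INT) auto
    qed
    also have "P.prob (\<Inter>k\<in>{..<K}. space M - E k) = (\<Prod>k<K. P.prob (space M - E k))"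
    proof -
      have "P.prob (\<Inter>k\<in>{..<K}. Y k -` C k \<inter> space M) = (\<Prod>k<K. P.prob (Y k -` C k \<inter> space M))"
        using False Cs by (intro P.indep_setsD[OF indY2]) auto
      then show ?thesis unfolding CE .
    qed
    also have "\<dots> \<le> (\<Prod>k<K. 1 - pw e ^ Nu)"
    proof (intro prod_mono conjI)
      fix k
      show "0 \<le> P.prob (space M - E k)" by simp
      show "P.prob (space M - E k) \<le> 1 - pw e ^ Nu"
        using P.prob_compl[OF Eev[of k]] PEk[of k] by simp
    qed
    also have "\<dots> = (1 - pw e ^ Nu) ^ K" by simp
    finally show ?thesis unfolding K_def e_def .
  qed
qed

end
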